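(* Let $X$ be a metrizable space and $\mathcal{U}$ an open cover of $X$. Then there is an l-complete continuous dissection $\mathcal{F}$ over $X$ such that every minimal $\mathcal{F}$-wedge is contained in $U\times I$ for some $U\in\mathcal{U}$.
   Context: Let $I=(0,1]$. For a metrizable space $X$, a continuous dissection over $X$ is a family $\mathcal{F}$ of continuous functions $X\to[0,1]$ containing the constant functions $0$ and $1$ that is locally finite: every $x\in X$ has a neighbourhood $U$ such that $\{\xi|_U:\xi\in\mathcal{F}\}$ is finite. It is l-complete if it is closed under pointwise maximum, pointwise minimum and pointwise limits of convergent directed families. An $\mathcal{F}$-wedge is a subset of $X\times I$ of the form $\{(x,t):\xi_1(x)<t\le\xi_2(x)\}$ with $\xi_1,\xi_2\in\mathcal{F}$; a minimal $\mathcal{F}$-wedge is a nonempty $\mathcal{F}$-wedge minimal under inclusion. *)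

theory Defs
  imports "HOL-Analysis.Analysis"
begin

text \<open>All functions are considered only on the carrier (topspace X); values
outside the carrier are irrelevant.\<close>

definition le_on :: "'a topology \<Rightarrow> ('a \<Rightarrow> real) \<Rightarrow> ('a \<Rightarrow> real) \<Rightarrow> bool" where
  "le_on X f g \<longleftrightarrow> (\<forall>x\<in>topspace X. f x \<le> g x)"

definition eq_on :: "'a topology \<Rightarrow> ('a \<Rightarrow> real) \<Rightarrow> ('a \<Rightarrow> real) \<Rightarrow> bool" where
  "eq_on X f g \<longleftrightarrow> (\<forall>x\<in>topspace X. f x = g x)"

definition net_filter :: "('b \<Rightarrow> 'b \<Rightarrow> bool) \<Rightarrow> 'b set \<Rightarrow> 'b filter" where
  "net_filter R D = (INF d\<in>D. principal {e\<in>D. R d e})"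

definition directed_by :: "('b \<Rightarrow> 'b \<Rightarrow> bool) \<Rightarrow> 'b set \<Rightarrow> bool" where
  "directed_by R D \<longleftrightarrow> D \<noteq> {} \<and> (\<forall>a\<in>D. \<forall>b\<in>D. \<exists>c\<in>D. R a c \<and> R b c)"

definition continuous_dissection :: "'a topology \<Rightarrow> ('a \<Rightarrow> real) set \<Rightarrow> bool" where
  "continuous_dissection X F \<longleftrightarrow>
     (\<forall>\<xi>\<in>F. continuous_map X euclideanreal \<xi> \<and> (\<forall>x\<in>topspace X. 0 \<le> \<xi> x \<and> \<xi> x \<le> 1))
   \<and> (\<lambda>x. 0) \<in> F \<and> (\<lambda>x. 1) \<in> F
   \<and> (\<forall>x\<in>topspace X. \<exists>U. openin X U \<and> x \<in> U \<and>
          finite ((\<lambda>\<xi>. restrict \<xi> U) ` F))"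

definition l_complete :: "'a topology \<Rightarrow> ('a \<Rightarrow> real) set \<Rightarrow> bool" where
  "l_complete X F \<longleftrightarrow>
     (\<forall>\<xi>1\<in>F. \<forall>\<xi>2\<in>F. (\<exists>\<eta>\<in>F. eq_on X \<eta> (\<lambda>x. max (\<xi>1 x) (\<xi>2 x)))
                     \<and> (\<exists>\<eta>\<in>F. eq_on X \<eta> (\<lambda>x. min (\<xi>1 x) (\<xi>2 x))))
   \<and> (\<forall>D g. D \<subseteq> F \<longrightarrow>
        (directed_by (le_on X) D \<and>
           (\<forall>x\<in>topspace X. ((\<lambda>\<xi>. \<xi> x) \<longlongrightarrow> g x) (net_filter (le_on X) D))
         \<or> directed_by (\<lambda>f g. le_on X g f) D \<and>
           (\<forall>x\<in>topspace X. ((\<lambda>\<xi>. \<xi> x) \<longlongrightarrow> g x) (net_filter (\<lambda>f g. le_on X g f) D)))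
        \<longrightarrow> (\<exists>\<eta>\<in>F. eq_on X \<eta> g))"

definition wedge :: "'a topology \<Rightarrow> ('a \<Rightarrow> real) \<Rightarrow> ('a \<Rightarrow> real) \<Rightarrow> ('a \<times> real) set" where
  "wedge X \<xi>1 \<xi>2 = {(x, t). x \<in> topspace X \<and> t \<in> {0<..1} \<and> \<xi>1 x < t \<and> t \<le> \<xi>2 x}"

definition is_wedge :: "'a topology \<Rightarrow> ('a \<Rightarrow> real) set \<Rightarrow> ('a \<times> real) set \<Rightarrow> bool" where
  "is_wedge X F W \<longleftrightarrow> (\<exists>\<xi>1\<in>F. \<exists>\<xi>2\<in>F. W = wedge X \<xi>1 \<xi>2)"

definition minimal_wedge :: "'a topology \<Rightarrow> ('a \<Rightarrow> real) set \<Rightarrow> ('a \<times> real) set \<Rightarrow> bool" where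
  "minimal_wedge X F W \<longleftrightarrow> is_wedge X F W \<and> W \<noteq> {} \<and>
     (\<forall>W'. is_wedge X F W' \<and> W' \<noteq> {} \<and> W' \<subseteq> W \<longrightarrow> W' = W)"

end

theory Submission
  imports Defs
begin

lemma continuous_map_local:
  assumes "\<And>x. x \<in> topspace X \<Longrightarrow> \<exists>N g. openin X N \<and> x \<in> N \<and>
             continuous_map X euclideanreal g \<and> (\<forall>y\<in>N. f y = g y)"
  shows "continuous_map X euclideanreal f"
  unfolding continuous_map_def
proof (intro conjI allI impI)
  show "f \<in> topspace X \<rightarrow> topspace euclideanreal" by auto
  fix U :: "real set" assume U: "openin euclideanreal U"
  show "openin X {x \<in> topspace X. f x \<in> U}"
  proof (subst openin_subopen, intro ballI)
    fix x assume x: "x \<in> {x \<in> topspace X. f x \<in> U}"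
    then obtain N g where N: "openin X N" "x \<in> N" "continuous_map X euclideanreal g"
       "\<forall>y\<in>N. f y = g y" using assms by blast
    have "openin X {x \<in> topspace X. g x \<in> U}"
      using N(3) U openin_continuous_map_preimage by blast
    then have "openin X (N \<inter> {x \<in> topspace X. g x \<in> U})" using N(1) by blast
    moreover have "N \<inter> {x \<in> topspace X. g x \<in> U} \<subseteq> {x \<in> topspace X. f x \<in> U}"
      using N(4) by auto
    moreover have "x \<in> N \<inter> {x \<in> topspace X. g x \<in> U}" using x N by auto
    ultimately show "\<exists>T. openin X T \<and> x \<in> T \<and> T \<subseteq> {x \<in> topspace X. f x \<in> U}" by blast
  qed
qed

lemma continuous_map_lf_sum:
  fixes f :: "'i \<Rightarrow> 'a \<Rightarrow> real"
  assumes cont: "\<And>i. i \<in> I \<Longrightarrow> continuous_map X euclideanreal (f i)"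
    and lf: "\<And>x. x \<in> topspace X \<Longrightarrow> \<exists>N. openin X N \<and> x \<in> N \<and> finite {i\<in>I. \<exists>y\<in>N. f i y \<noteq> 0}"
    and S: "S \<subseteq> I"
  shows "continuous_map X euclideanreal (\<lambda>x. \<Sum>i\<in>S \<inter> {i\<in>I. f i x \<noteq> 0}. f i x)"
proof (rule continuous_map_local)
  fix x assume "x \<in> topspace X"
  then obtain N where N: "openin X N" "x \<in> N" "finite {i\<in>I. \<exists>y\<in>N. f i y \<noteq> 0}"
    using lf by blast
  define J where "J = S \<inter> {i\<in>I. \<exists>y\<in>N. f i y \<noteq> 0}"
  have fJ: "finite J" using N(3) by (simp add: J_def)
  have "continuous_map X euclideanreal (\<lambda>y. \<Sum>i\<in>J. f i y)"
    by (rule continuous_map_sum) (use fJ cont S J_def in auto)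
  moreover have "\<forall>y\<in>N. (\<Sum>i\<in>S \<inter> {i\<in>I. f i y \<noteq> 0}. f i y) = (\<Sum>i\<in>J. f i y)"
  proof
    fix y assume y: "y \<in> N"
    show "(\<Sum>i\<in>S \<inter> {i\<in>I. f i y \<noteq> 0}. f i y) = (\<Sum>i\<in>J. f i y)"
      by (rule sum.mono_neutral_left) (use fJ y in \<open>auto simp: J_def\<close>)
  qed
  ultimately show "\<exists>N g. openin X N \<and> x \<in> N \<and> continuous_map X euclideanreal g \<and>
     (\<forall>y\<in>N. (\<Sum>i\<in>S \<inter> {i\<in>I. f i y \<noteq> 0}. f i y) = g y)"
    using N by blast
qed

lemma net_filter_ev:
  "d \<in> D \<Longrightarrow> eventually (\<lambda>e. e \<in> D \<and> R d e) (net_filter R D)"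
  unfolding net_filter_def
  by (rule eventually_INF1[where i=d]) (auto simp: eventually_principal)

lemma net_filter_proper:
  assumes "directed_by R D" and refl: "\<And>a. a \<in> D \<Longrightarrow> R a a"
    and trans: "\<And>a b c. a \<in> D \<Longrightarrow> b \<in> D \<Longrightarrow> c \<in> D \<Longrightarrow> R a b \<Longrightarrow> R b c \<Longrightarrow> R a c"
  shows "net_filter R D \<noteq> bot"
proof
  assume "net_filter R D = bot"
  then have "eventually (\<lambda>_. False) (net_filter R D)" by simp
  moreover have "D \<noteq> {}" using assms(1) by (simp add: directed_by_def)
  moreover have "\<exists>x\<in>D. principal {e\<in>D. R x e} \<le> inf (principal {e\<in>D. R a e}) (principal {e\<in>D. R b e})"
    if "a \<in> D" "b \<in> D" for a b
  proof -
    from assms(1) that obtain c where "c \<in> D" "R a c" "R b c" unfolding directed_by_def by blast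
    then have "{e\<in>D. R c e} \<subseteq> {e\<in>D. R a e} \<inter> {e\<in>D. R b e}" using trans that by blast
    then show ?thesis using \<open>c \<in> D\<close> by (intro bexI[of _ c]) simp_all
  qed
  ultimately have "\<exists>b\<in>D. eventually (\<lambda>_. False) (principal {e\<in>D. R b e})"
    unfolding net_filter_def using eventually_INF_base[of D "\<lambda>b. principal {e\<in>D. R b e}" "\<lambda>_. False"]
    by blast
  then obtain d where "d \<in> D" "eventually (\<lambda>_. False) (principal {e\<in>D. R d e})" by blast
  then show False using refl unfolding eventually_principal by blast
qed

lemma finite_lt_max:
  assumes "finite P" "P \<noteq> {}" "P \<subseteq> I"
    and trans: "\<And>i j k. i\<in>I \<Longrightarrow> j\<in>I \<Longrightarrow> k\<in>I \<Longrightarrow> lt i j \<Longrightarrow> lt j k \<Longrightarrow> lt i k"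
    and total: "\<And>i j. i\<in>I \<Longrightarrow> j\<in>I \<Longrightarrow> i \<noteq> j \<Longrightarrow> lt i j \<or> lt j i"
  shows "\<exists>m\<in>P. \<forall>j\<in>P. j \<noteq> m \<longrightarrow> lt j m"
  using assms(1-3)
proof (induction P rule: finite_ne_induct)
  case (singleton x) then show ?case by auto
next
  case (insert a P)
  then obtain m where m: "m \<in> P" "\<forall>j\<in>P. j \<noteq> m \<longrightarrow> lt j m" by auto
  have "a \<noteq> m" using insert m by auto
  then consider "lt m a" | "lt a m" using total insert m by blast
  then show ?case
  proof cases
    case 1
    have "\<forall>j\<in>insert a P. j \<noteq> a \<longrightarrow> lt j a"
    proof (intro ballI impI)
      fix j assume "j \<in> insert a P" "j \<noteq> a"
      then have "j \<in> P" by simp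
      show "lt j a"
      proof (cases "j = m")
        case True then show ?thesis using 1 by simp
      next
        case False
        then have "lt j m" using m \<open>j \<in> P\<close> by blast
        then show ?thesis using trans[of j m a] 1 insert.prems \<open>j \<in> P\<close> m(1) by blast
      qed
    qed
    then show ?thesis by blast
  next
    case 2
    then show ?thesis using m by (intro bexI[of _ m]) auto
  qed
qed

locale pdiss =
  fixes X :: "'a topology" and I :: "'i set" and lt :: "'i \<Rightarrow> 'i \<Rightarrow> bool"
    and \<phi> :: "'i \<Rightarrow> 'a \<Rightarrow> real" and \<U> :: "'a set set"
  assumes lt_trans: "\<And>i j k. i\<in>I \<Longrightarrow> j\<in>I \<Longrightarrow> k\<in>I \<Longrightarrow> lt i j \<Longrightarrow> lt j k \<Longrightarrow> lt i k"
    and lt_irrefl: "\<And>i. \<not> lt i i"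
    and lt_total: "\<And>i j. i\<in>I \<Longrightarrow> j\<in>I \<Longrightarrow> i \<noteq> j \<Longrightarrow> lt i j \<or> lt j i"
    and cont: "\<And>i. i\<in>I \<Longrightarrow> continuous_map X euclideanreal (\<phi> i)"
    and nonneg: "\<And>i x. 0 \<le> \<phi> i x"
    and lf: "\<And>x. x\<in>topspace X \<Longrightarrow> \<exists>N. openin X N \<and> x\<in>N \<and> finite {i\<in>I. \<exists>y\<in>N. \<phi> i y \<noteq> 0}"
    and fin: "\<And>x. finite {i\<in>I. \<phi> i x \<noteq> 0}"
    and one: "\<And>x. (\<Sum>i\<in>{i\<in>I. \<phi> i x \<noteq> 0}. \<phi> i x) = 1"
    and sub: "\<And>i. i\<in>I \<Longrightarrow> \<exists>U\<in>\<U>. {x\<in>topspace X. \<phi> i x \<noteq> 0} \<subseteq> U"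
begin

definition Z where "Z x = {i\<in>I. \<phi> i x \<noteq> 0}"
definition s where "s S x = (\<Sum>i\<in>S \<inter> Z x. \<phi> i x)"
definition down where "down S \<longleftrightarrow> S \<subseteq> I \<and> (\<forall>i\<in>S. \<forall>j\<in>I. lt j i \<longrightarrow> j\<in>S)"
definition FF where "FF = s ` Collect down"

lemma finZ: "finite (Z x)" using fin by (simp add: Z_def)

lemma s_mono: "S \<subseteq> T \<Longrightarrow> s S x \<le> s T x"
  unfolding s_def by (rule sum_mono2) (use finZ nonneg in auto)

lemma s_nonneg: "0 \<le> s S x"
  unfolding s_def by (rule sum_nonneg) (use nonneg in auto)

lemma s_I: "s I = (\<lambda>x. 1)"
proof
  fix x have "I \<inter> Z x = {i\<in>I. \<phi> i x \<noteq> 0}" by (auto simp: Z_def)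
  then show "s I x = 1" using one by (simp add: s_def)
qed

lemma s_empty: "s {} = (\<lambda>x. 0)" by (auto simp: s_def)

lemma s_le1: "S \<subseteq> I \<Longrightarrow> s S x \<le> 1"
proof -
  assume "S \<subseteq> I"
  then have "s S x \<le> s I x" by (rule s_mono)
  then show ?thesis by (simp add: s_I)
qed

lemma s_cong: "S \<inter> Z x = T \<inter> Z x \<Longrightarrow> s S x = s T x" by (simp add: s_def)

lemma down_chain: "down S \<Longrightarrow> down T \<Longrightarrow> S \<subseteq> T \<or> T \<subseteq> S"
proof (rule ccontr)
  assume S: "down S" and T: "down T" and "\<not> (S \<subseteq> T \<or> T \<subseteq> S)"
  then obtain i j where ij: "i \<in> S" "i \<notin> T" "j \<in> T" "j \<notin> S" by blast
  have "i \<in> I" "j \<in> I" using S T ij by (auto simp: down_def)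
  moreover have "i \<noteq> j" using ij by auto
  ultimately consider "lt i j" | "lt j i" using lt_total by blast
  then show False
  proof cases
    case 1 then show False using T ij \<open>i \<in> I\<close> by (auto simp: down_def)
  next
    case 2 then show False using S ij \<open>j \<in> I\<close> by (auto simp: down_def)
  qed
qed

lemma down_empty: "down {}" by (simp add: down_def)
lemma down_I: "down I" by (simp add: down_def)

lemma s_cont: "S \<subseteq> I \<Longrightarrow> continuous_map X euclideanreal (s S)"
proof -
  assume S: "S \<subseteq> I"
  have "continuous_map X euclideanreal (\<lambda>x. \<Sum>i\<in>S \<inter> {i\<in>I. \<phi> i x \<noteq> 0}. \<phi> i x)"
    by (rule continuous_map_lf_sum[OF cont lf S])
  moreover have "(\<lambda>x. \<Sum>i\<in>S \<inter> {i\<in>I. \<phi> i x \<noteq> 0}. \<phi> i x) = s S"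
    by (auto simp: s_def Z_def)
  ultimately show ?thesis by simp
qed

lemma FF_props: "\<xi> \<in> FF \<Longrightarrow> continuous_map X euclideanreal \<xi> \<and> (\<forall>x\<in>topspace X. 0 \<le> \<xi> x \<and> \<xi> x \<le> 1)"
proof -
  assume "\<xi> \<in> FF"
  then obtain S where S: "down S" "\<xi> = s S" by (auto simp: FF_def)
  then have SI: "S \<subseteq> I" by (simp add: down_def)
  have "continuous_map X euclideanreal (s S)" using SI by (rule s_cont)
  moreover have "\<forall>x\<in>topspace X. 0 \<le> s S x \<and> s S x \<le> 1" using s_nonneg s_le1[OF SI] by blast
  ultimately show ?thesis using S(2) by simp
qed

lemma zero_FF: "(\<lambda>x. 0) \<in> FF"
proof -
  have "s {} \<in> FF" unfolding FF_def using down_empty by blast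
  then show ?thesis by (simp add: s_empty)
qed

lemma one_FF: "(\<lambda>x. 1) \<in> FF"
proof -
  have "s I \<in> FF" unfolding FF_def using down_I by blast
  then show ?thesis by (simp add: s_I)
qed

lemma FF_lf: "x \<in> topspace X \<Longrightarrow> \<exists>U. openin X U \<and> x \<in> U \<and> finite ((\<lambda>\<xi>. restrict \<xi> U) ` FF)"
proof -
  assume "x \<in> topspace X"
  then obtain N where N: "openin X N" "x\<in>N" "finite {i\<in>I. \<exists>y\<in>N. \<phi> i y \<noteq> 0}"
    using lf by blast
  define J where "J = {i\<in>I. \<exists>y\<in>N. \<phi> i y \<noteq> 0}"
  have "(\<lambda>\<xi>. restrict \<xi> N) ` FF \<subseteq> (\<lambda>T. restrict (s T) N) ` Pow J"
  proof
    fix r assume "r \<in> (\<lambda>\<xi>. restrict \<xi> N) ` FF"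
    then obtain S where S: "down S" "r = restrict (s S) N" by (auto simp: FF_def)
    have "restrict (s S) N = restrict (s (S \<inter> J)) N"
    proof
      fix y show "restrict (s S) N y = restrict (s (S \<inter> J)) N y"
      proof (cases "y \<in> N")
        case True
        then have "S \<inter> Z y = (S \<inter> J) \<inter> Z y" by (auto simp: Z_def J_def)
        then have "s S y = s (S \<inter> J) y" by (rule s_cong)
        then show ?thesis using True by simp
      qed simp
    qed
    with S(2) have "r = restrict (s (S \<inter> J)) N" by (rule trans)
    then show "r \<in> (\<lambda>T. restrict (s T) N) ` Pow J" by (rule image_eqI) simp
  qed
  moreover have "finite (Pow J)" using N(3) by (simp add: J_def)
  then have "finite ((\<lambda>T. restrict (s T) N) ` Pow J)" by (rule finite_imageI)
  ultimately have "finite ((\<lambda>\<xi>. restrict \<xi> N) ` FF)" by (rule finite_subset)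
  then show ?thesis using N by blast
qed

lemma dissection: "continuous_dissection X FF"
proof -
  have a: "\<forall>\<xi>\<in>FF. continuous_map X euclideanreal \<xi> \<and> (\<forall>x\<in>topspace X. 0 \<le> \<xi> x \<and> \<xi> x \<le> 1)"
    using FF_props by blast
  have b: "\<forall>x\<in>topspace X. \<exists>U. openin X U \<and> x \<in> U \<and> finite ((\<lambda>\<xi>. restrict \<xi> U) ` FF)"
    using FF_lf by blast
  show ?thesis unfolding continuous_dissection_def
    by (intro conjI) (rule a, rule zero_FF, rule one_FF, rule b)
qed


lemma FF_down: "\<xi> \<in> FF \<Longrightarrow> \<exists>S. down S \<and> \<xi> = s S"
  by (auto simp: FF_def)

lemma down_FF: "down S \<Longrightarrow> s S \<in> FF"
  by (auto simp: FF_def)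

lemma max_min_FF:
  assumes "\<xi>1 \<in> FF" "\<xi>2 \<in> FF"
  shows "(\<exists>\<eta>\<in>FF. eq_on X \<eta> (\<lambda>x. max (\<xi>1 x) (\<xi>2 x))) \<and> (\<exists>\<eta>\<in>FF. eq_on X \<eta> (\<lambda>x. min (\<xi>1 x) (\<xi>2 x)))"
proof -
  obtain S1 S2 where S: "down S1" "\<xi>1 = s S1" "down S2" "\<xi>2 = s S2"
    using assms FF_down by metis
  consider "S1 \<subseteq> S2" | "S2 \<subseteq> S1" using down_chain S by blast
  then show ?thesis
  proof cases
    case 1
    then have le: "\<And>x. \<xi>1 x \<le> \<xi>2 x" using S s_mono by simp
    have "eq_on X \<xi>2 (\<lambda>x. max (\<xi>1 x) (\<xi>2 x))" "eq_on X \<xi>1 (\<lambda>x. min (\<xi>1 x) (\<xi>2 x))"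
      unfolding eq_on_def using le by (simp_all add: max_absorb2 min_absorb1)
    then show ?thesis using assms by blast
  next
    case 2
    then have le: "\<And>x. \<xi>2 x \<le> \<xi>1 x" using S s_mono by simp
    have "eq_on X \<xi>1 (\<lambda>x. max (\<xi>1 x) (\<xi>2 x))" "eq_on X \<xi>2 (\<lambda>x. min (\<xi>1 x) (\<xi>2 x))"
      unfolding eq_on_def using le by (simp_all add: max_absorb1 min_absorb2)
    then show ?thesis using assms by blast
  qed
qed

lemma lim_up:
  assumes D: "D \<subseteq> FF" "directed_by (le_on X) D"
    and lim: "\<forall>x\<in>topspace X. ((\<lambda>\<xi>. \<xi> x) \<longlongrightarrow> g x) (net_filter (le_on X) D)"
  shows "\<exists>\<eta>\<in>FF. eq_on X \<eta> g"
proof -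
  define Sd where "Sd = {S. down S \<and> s S \<in> D}"
  define T where "T = \<Union>Sd"
  have downT: "down T" unfolding T_def Sd_def down_def by blast
  have "D \<noteq> {}" using D(2) by (simp add: directed_by_def)
  then obtain \<xi> where "\<xi> \<in> D" by blast
  then obtain S where "down S" "\<xi> = s S" using D(1) FF_down by blast
  then have Sd_ne: "Sd \<noteq> {}" using \<open>\<xi> \<in> D\<close> by (auto simp: Sd_def)
  have proper: "net_filter (le_on X) D \<noteq> bot"
    by (rule net_filter_proper[OF D(2)]) (auto simp: le_on_def intro: order_trans)
  have "eq_on X (s T) g" unfolding eq_on_def
  proof
    fix x assume x: "x \<in> topspace X"
    define SS where "SS = (\<lambda>S. S \<inter> Z x) ` Sd"
    have "SS \<subseteq> Pow (Z x)" by (auto simp: SS_def)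
    then have finSS: "finite SS" using finZ finite_subset by blast
    have neSS: "SS \<noteq> {}" using Sd_ne by (simp add: SS_def)
    have "subset.chain (Pow (Z x)) SS"
      unfolding subset_chain_def
    proof (intro conjI ballI)
      show "SS \<subseteq> Pow (Z x)" by fact
      fix A B assume "A \<in> SS" "B \<in> SS"
      then obtain S1 S2 where "S1 \<in> Sd" "S2 \<in> Sd" "A = S1 \<inter> Z x" "B = S2 \<inter> Z x"
        by (auto simp: SS_def)
      moreover have "S1 \<subseteq> S2 \<or> S2 \<subseteq> S1" using down_chain calculation by (simp add: Sd_def)
      ultimately show "A \<subseteq> B \<or> B \<subseteq> A" by blast
    qed
    then have "\<Union>SS \<in> SS" by (rule Union_in_chain[OF finSS neSS])
    then obtain S0 where S0: "S0 \<in> Sd" "S0 \<inter> Z x = \<Union>SS" by (auto simp: SS_def)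
    have "T \<inter> Z x = \<Union>SS" by (auto simp: T_def SS_def)
    then have "T \<inter> Z x = S0 \<inter> Z x" using S0 by simp
    then have sT: "s T x = s S0 x" by (rule s_cong)
    have "s S0 \<in> D" using S0 by (simp add: Sd_def)
    then have "eventually (\<lambda>e. e \<in> D \<and> le_on X (s S0) e) (net_filter (le_on X) D)"
      by (rule net_filter_ev)
    then have ev: "eventually (\<lambda>e. e x = s T x) (net_filter (le_on X) D)"
    proof (rule eventually_mono)
      fix e assume e: "e \<in> D \<and> le_on X (s S0) e"
      then obtain S where S: "down S" "e = s S" using D(1) FF_down by blast
      then have "S \<in> Sd" using e by (simp add: Sd_def)
      then have "S \<subseteq> T" by (auto simp: T_def)
      then have "s S x \<le> s T x" by (rule s_mono)
      moreover have "s S0 x \<le> e x" using e x by (simp add: le_on_def)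
      ultimately show "e x = s T x" using sT unfolding S(2) by linarith
    qed
    have "((\<lambda>e. e x) \<longlongrightarrow> s T x) (net_filter (le_on X) D)" using ev by (rule tendsto_eventually)
    moreover have "((\<lambda>e. e x) \<longlongrightarrow> g x) (net_filter (le_on X) D)" using lim x by blast
    ultimately show "s T x = g x" using proper tendsto_unique by blast
  qed
  then show ?thesis using downT down_FF by blast
qed

lemma lim_down:
  assumes D: "D \<subseteq> FF" "directed_by (\<lambda>f g. le_on X g f) D"
    and lim: "\<forall>x\<in>topspace X. ((\<lambda>\<xi>. \<xi> x) \<longlongrightarrow> g x) (net_filter (\<lambda>f g. le_on X g f) D)"
  shows "\<exists>\<eta>\<in>FF. eq_on X \<eta> g"
proof -
  define Sd where "Sd = {S. down S \<and> s S \<in> D}"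
  define T where "T = I \<inter> \<Inter>Sd"
  have downT: "down T" unfolding T_def Sd_def down_def by blast
  have "D \<noteq> {}" using D(2) by (simp add: directed_by_def)
  then obtain \<xi> where "\<xi> \<in> D" by blast
  then obtain S where "down S" "\<xi> = s S" using D(1) FF_down by blast
  then have Sd_ne: "Sd \<noteq> {}" using \<open>\<xi> \<in> D\<close> by (auto simp: Sd_def)
  have proper: "net_filter (\<lambda>f g. le_on X g f) D \<noteq> bot"
    by (rule net_filter_proper[OF D(2)]) (auto simp: le_on_def intro: order_trans)
  have "eq_on X (s T) g" unfolding eq_on_def
  proof
    fix x assume x: "x \<in> topspace X"
    define SS where "SS = (\<lambda>S. S \<inter> Z x) ` Sd"
    have "SS \<subseteq> Pow (Z x)" by (auto simp: SS_def)
    then have finSS: "finite SS" using finZ finite_subset by blast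
    have neSS: "SS \<noteq> {}" using Sd_ne by (simp add: SS_def)
    have "subset.chain (Pow (Z x)) SS"
      unfolding subset_chain_def
    proof (intro conjI ballI)
      show "SS \<subseteq> Pow (Z x)" by fact
      fix A B assume "A \<in> SS" "B \<in> SS"
      then obtain S1 S2 where "S1 \<in> Sd" "S2 \<in> Sd" "A = S1 \<inter> Z x" "B = S2 \<inter> Z x"
        by (auto simp: SS_def)
      moreover have "S1 \<subseteq> S2 \<or> S2 \<subseteq> S1" using down_chain calculation by (simp add: Sd_def)
      ultimately show "A \<subseteq> B \<or> B \<subseteq> A" by blast
    qed
    then have "\<Inter>SS \<in> SS" by (rule Inter_in_chain[OF finSS neSS])
    then obtain S0 where S0: "S0 \<in> Sd" "S0 \<inter> Z x = \<Inter>SS" by (auto simp: SS_def)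
    have ZI: "Z x \<subseteq> I" by (auto simp: Z_def)
    have "T \<inter> Z x = \<Inter>SS" using Sd_ne ZI by (auto simp: T_def SS_def)
    then have "T \<inter> Z x = S0 \<inter> Z x" using S0 by simp
    then have sT: "s T x = s S0 x" by (rule s_cong)
    have "s S0 \<in> D" using S0 by (simp add: Sd_def)
    then have "eventually (\<lambda>e. e \<in> D \<and> le_on X e (s S0)) (net_filter (\<lambda>f g. le_on X g f) D)"
      by (rule net_filter_ev)
    then have ev: "eventually (\<lambda>e. e x = s T x) (net_filter (\<lambda>f g. le_on X g f) D)"
    proof (rule eventually_mono)
      fix e assume e: "e \<in> D \<and> le_on X e (s S0)"
      then obtain S where S: "down S" "e = s S" using D(1) FF_down by blast
      then have "S \<in> Sd" using e by (simp add: Sd_def)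
      then have "T \<subseteq> S" by (auto simp: T_def)
      then have "s T x \<le> s S x" by (rule s_mono)
      moreover have "e x \<le> s S0 x" using e x by (simp add: le_on_def)
      ultimately show "e x = s T x" using sT unfolding S(2) by linarith
    qed
    have "((\<lambda>e. e x) \<longlongrightarrow> s T x) (net_filter (\<lambda>f g. le_on X g f) D)" using ev by (rule tendsto_eventually)
    moreover have "((\<lambda>e. e x) \<longlongrightarrow> g x) (net_filter (\<lambda>f g. le_on X g f) D)" using lim x by blast
    ultimately show "s T x = g x" using proper tendsto_unique by blast
  qed
  then show ?thesis using downT down_FF by blast
qed

lemma lcomplete: "l_complete X FF"
  unfolding l_complete_def
proof (intro conjI)
  show "\<forall>\<xi>1\<in>FF. \<forall>\<xi>2\<in>FF. (\<exists>\<eta>\<in>FF. eq_on X \<eta> (\<lambda>x. max (\<xi>1 x) (\<xi>2 x))) \<and> (\<exists>\<eta>\<in>FF. eq_on X \<eta> (\<lambda>x. min (\<xi>1 x) (\<xi>2 x)))"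
    using max_min_FF by blast
  show "\<forall>D g. D \<subseteq> FF \<longrightarrow>
        (directed_by (le_on X) D \<and>
           (\<forall>x\<in>topspace X. ((\<lambda>\<xi>. \<xi> x) \<longlongrightarrow> g x) (net_filter (le_on X) D))
         \<or> directed_by (\<lambda>f g. le_on X g f) D \<and>
           (\<forall>x\<in>topspace X. ((\<lambda>\<xi>. \<xi> x) \<longlongrightarrow> g x) (net_filter (\<lambda>f g. le_on X g f) D)))
        \<longrightarrow> (\<exists>\<eta>\<in>FF. eq_on X \<eta> g)"
  proof (intro allI impI)
    fix D g assume "D \<subseteq> FF" and h: "directed_by (le_on X) D \<and>
           (\<forall>x\<in>topspace X. ((\<lambda>\<xi>. \<xi> x) \<longlongrightarrow> g x) (net_filter (le_on X) D))
         \<or> directed_by (\<lambda>f g. le_on X g f) D \<and>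
           (\<forall>x\<in>topspace X. ((\<lambda>\<xi>. \<xi> x) \<longlongrightarrow> g x) (net_filter (\<lambda>f g. le_on X g f) D))"
    from h show "\<exists>\<eta>\<in>FF. eq_on X \<eta> g"
    proof
      assume "directed_by (le_on X) D \<and>
           (\<forall>x\<in>topspace X. ((\<lambda>\<xi>. \<xi> x) \<longlongrightarrow> g x) (net_filter (le_on X) D))"
      then show ?thesis using lim_up \<open>D \<subseteq> FF\<close> by blast
    next
      assume "directed_by (\<lambda>f g. le_on X g f) D \<and>
           (\<forall>x\<in>topspace X. ((\<lambda>\<xi>. \<xi> x) \<longlongrightarrow> g x) (net_filter (\<lambda>f g. le_on X g f) D))"
      then show ?thesis using lim_down \<open>D \<subseteq> FF\<close> by blast
    qed
  qed
qed


lemma step: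
  assumes dA: "down A" and At: "s A x < t"
  shows "down B \<Longrightarrow> t \<le> s B x \<Longrightarrow> \<exists>L m. down L \<and> down (insert m L) \<and> A \<subseteq> L \<and> insert m L \<subseteq> B
                 \<and> m \<in> I \<and> s L x < t \<and> t \<le> s (insert m L) x"
proof (induction "card ((B - A) \<inter> Z x)" arbitrary: B rule: less_induct)
  case less
  note dB = less.prems(1) and Bt = less.prems(2)
  have AB: "A \<subseteq> B"
  proof (rule ccontr)
    assume "\<not> A \<subseteq> B"
    then have "B \<subseteq> A" using down_chain dA dB by blast
    then have "s B x \<le> s A x" by (rule s_mono)
    then show False using At Bt by linarith
  qed
  define P where "P = (B - A) \<inter> Z x"
  have Pne: "P \<noteq> {}"
  proof
    assume "P = {}"
    then have "B \<inter> Z x = A \<inter> Z x" using AB by (auto simp: P_def)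
    then have "s B x = s A x" by (rule s_cong)
    then show False using At Bt by linarith
  qed
  have PI: "P \<subseteq> I" by (auto simp: P_def Z_def)
  have finP: "finite P" using finZ by (auto simp: P_def)
  have "\<exists>m\<in>P. \<forall>j\<in>P. j \<noteq> m \<longrightarrow> lt j m"
  proof (rule finite_lt_max[of P I lt])
    show "finite P" by (rule finP)
    show "P \<noteq> {}" by (rule Pne)
    show "P \<subseteq> I" by (rule PI)
  next
    fix i j k assume "i\<in>I" "j\<in>I" "k\<in>I" "lt i j" "lt j k" then show "lt i k" by (rule lt_trans)
  next
    fix i j assume "i\<in>I" "j\<in>I" "i\<noteq>j" then show "lt i j \<or> lt j i" by (rule lt_total)
  qed
  then obtain m where m: "m \<in> P" "\<forall>j\<in>P. j \<noteq> m \<longrightarrow> lt j m" by blast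
  have mI: "m \<in> I" using m PI by blast
  have mB: "m \<in> B" "m \<notin> A" using m by (auto simp: P_def)
  define B' where "B' = A \<union> {j\<in>B. lt j m}"
  have BI: "B \<subseteq> I" and AI: "A \<subseteq> I" using dA dB by (auto simp: down_def)
  have dB': "down B'"
    unfolding down_def
  proof (intro conjI ballI impI)
    show "B' \<subseteq> I" using AI BI by (auto simp: B'_def)
    fix i j assume i: "i \<in> B'" and j: "j \<in> I" and ji: "lt j i"
    show "j \<in> B'"
    proof (cases "i \<in> A")
      case True
      then show ?thesis using dA j ji by (auto simp: down_def B'_def)
    next
      case False
      then have iB: "i \<in> B" "lt i m" using i by (auto simp: B'_def)
      then have "j \<in> B" using dB j ji by (auto simp: down_def)
      moreover have "lt j m" using lt_trans[of j i m] j iB BI mI ji by blast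
      ultimately show ?thesis by (simp add: B'_def)
    qed
  qed
  have AB': "A \<subseteq> B'" by (simp add: B'_def)
  have B'B: "B' \<subseteq> B" using AB by (auto simp: B'_def)
  have mB': "m \<notin> B'" using mB lt_irrefl by (auto simp: B'_def)
  show ?case
  proof (cases "t \<le> s B' x")
    case True
    have "(B' - A) \<inter> Z x \<subset> (B - A) \<inter> Z x"
      using B'B mB' m(1) by (auto simp: P_def)
    moreover have "finite ((B - A) \<inter> Z x)" using finZ by simp
    ultimately have "card ((B' - A) \<inter> Z x) < card ((B - A) \<inter> Z x)" by (rule psubset_card_mono[rotated])
    from less.hyps[OF this dB' True] obtain L m' where
      "down L" "down (insert m' L)" "A \<subseteq> L" "insert m' L \<subseteq> B'" "m' \<in> I" "s L x < t" "t \<le> s (insert m' L) x"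
      by blast
    then show ?thesis using B'B by blast
  next
    case False
    have dmB': "down (insert m B')"
      unfolding down_def
    proof (intro conjI ballI impI)
      show "insert m B' \<subseteq> I" using dB' mI by (auto simp: down_def)
      fix i j assume i: "i \<in> insert m B'" and j: "j \<in> I" and ji: "lt j i"
      show "j \<in> insert m B'"
      proof (cases "i = m")
        case True
        then have "j \<in> B" using dB j ji mB by (auto simp: down_def)
        then show ?thesis using True ji by (simp add: B'_def)
      next
        case False
        then have "i \<in> B'" using i by simp
        then show ?thesis using dB' j ji by (auto simp: down_def)
      qed
    qed
    have "insert m B' \<inter> Z x = B \<inter> Z x"
    proof
      show "insert m B' \<inter> Z x \<subseteq> B \<inter> Z x" using B'B mB by auto
      show "B \<inter> Z x \<subseteq> insert m B' \<inter> Z x"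
      proof
        fix j assume j: "j \<in> B \<inter> Z x"
        show "j \<in> insert m B' \<inter> Z x"
        proof (cases "j \<in> A")
          case True then show ?thesis using j by (simp add: B'_def)
        next
          case False
          then have "j \<in> P" using j by (simp add: P_def)
          then have "j = m \<or> lt j m" using m by blast
          then show ?thesis using j by (auto simp: B'_def)
        qed
      qed
    qed
    then have "s (insert m B') x = s B x" by (rule s_cong)
    then have "t \<le> s (insert m B') x" using Bt by simp
    moreover have "s B' x < t" using False by simp
    moreover have "insert m B' \<subseteq> B" using B'B mB by simp
    ultimately show ?thesis using dB' dmB' AB' mI by blast
  qed
qed


lemma minimal:
  assumes W: "minimal_wedge X FF W"
  shows "\<exists>U\<in>\<U>. W \<subseteq> U \<times> {0<..1}"
proof -
  have W1: "is_wedge X FF W" and Wne: "W \<noteq> {}"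
    and Wmin': "\<forall>W'. is_wedge X FF W' \<and> W' \<noteq> {} \<and> W' \<subseteq> W \<longrightarrow> W' = W"
    using W unfolding minimal_wedge_def by simp_all
  from W1 obtain \<xi>1 \<xi>2 where xi: "\<xi>1 \<in> FF" "\<xi>2 \<in> FF" "W = wedge X \<xi>1 \<xi>2"
    unfolding is_wedge_def by blast
  obtain A B where AB: "down A" "\<xi>1 = s A" "down B" "\<xi>2 = s B" using xi FF_down by metis
  obtain x t where xt: "(x, t) \<in> W" using Wne by auto
  then have x: "x \<in> topspace X" "t \<in> {0<..1}" "s A x < t" "t \<le> s B x"
    using xi(3) AB by (auto simp: wedge_def)
  obtain L m where Lm: "down L" "down (insert m L)" "A \<subseteq> L" "insert m L \<subseteq> B" "m \<in> I"
      "s L x < t" "t \<le> s (insert m L) x"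
    using step[OF AB(1) x(3) AB(3) x(4)] by blast
  define W' where "W' = wedge X (s L) (s (insert m L))"
  have "is_wedge X FF W'" unfolding is_wedge_def W'_def using Lm down_FF by blast
  moreover have "W' \<noteq> {}" using x Lm by (auto simp: W'_def wedge_def)
  moreover have "W' \<subseteq> W"
  proof
    fix p assume "p \<in> W'"
    then obtain y u where p: "p = (y, u)" "y \<in> topspace X" "u \<in> {0<..1}" "s L y < u" "u \<le> s (insert m L) y"
      by (auto simp: W'_def wedge_def)
    have "s A y \<le> s L y" using Lm(3) by (rule s_mono)
    moreover have "s (insert m L) y \<le> s B y" using Lm(4) by (rule s_mono)
    ultimately show "p \<in> W" using p xi(3) AB by (auto simp: wedge_def)
  qed
  ultimately have WW: "W' = W" using Wmin' by blast
  obtain U where U: "U \<in> \<U>" "{x\<in>topspace X. \<phi> m x \<noteq> 0} \<subseteq> U" using sub Lm(5) by blast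
  have "W \<subseteq> U \<times> {0<..1}"
  proof
    fix p assume "p \<in> W"
    then obtain y u where p: "p = (y, u)" "y \<in> topspace X" "u \<in> {0<..1}" "s L y < u" "u \<le> s (insert m L) y"
      using WW by (auto simp: W'_def wedge_def)
    have "\<phi> m y \<noteq> 0"
    proof
      assume "\<phi> m y = 0"
      then have "insert m L \<inter> Z y = L \<inter> Z y" by (auto simp: Z_def)
      then have "s (insert m L) y = s L y" by (rule s_cong)
      then show False using p by linarith
    qed
    then show "p \<in> U \<times> {0<..1}" using U p by auto
  qed
  then show ?thesis using U by blast
qed

theorem main: "\<exists>F. continuous_dissection X F \<and> l_complete X F \<and>
           (\<forall>W. minimal_wedge X F W \<longrightarrow> (\<exists>U\<in>\<U>. W \<subseteq> U \<times> {0<..1}))"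
  using dissection lcomplete minimal by blast

end

lemma exists_wo:
  "\<exists>lt::'b \<Rightarrow> 'b \<Rightarrow> bool. (\<forall>a b c. a\<in>A \<longrightarrow> b\<in>A \<longrightarrow> c\<in>A \<longrightarrow> lt a b \<longrightarrow> lt b c \<longrightarrow> lt a c)
     \<and> (\<forall>a. \<not> lt a a) \<and> (\<forall>a\<in>A. \<forall>b\<in>A. a \<noteq> b \<longrightarrow> lt a b \<or> lt b a)
     \<and> (\<forall>S. S \<subseteq> A \<longrightarrow> S \<noteq> {} \<longrightarrow> (\<exists>m\<in>S. \<forall>b\<in>S. b \<noteq> m \<longrightarrow> lt m b))"
proof -
  obtain r where r: "well_order_on A r" using well_order_on by blast
  then have tr: "trans r" and an: "antisym r" and to: "total_on A r" and wf: "wf (r - Id)"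
    by (auto simp: well_order_on_def linear_order_on_def partial_order_on_def preorder_on_def)
  define lt where "lt a b \<longleftrightarrow> (a, b) \<in> r \<and> a \<noteq> b" for a b
  have 1: "\<forall>a b c. a\<in>A \<longrightarrow> b\<in>A \<longrightarrow> c\<in>A \<longrightarrow> lt a b \<longrightarrow> lt b c \<longrightarrow> lt a c"
  proof (intro allI impI)
    fix a b c assume "lt a b" "lt b c"
    then have ab: "(a,b) \<in> r" "a \<noteq> b" and bc: "(b,c) \<in> r" "b \<noteq> c" by (auto simp: lt_def)
    have "(a,c) \<in> r" using tr ab bc by (meson transD)
    moreover have "a \<noteq> c"
    proof
      assume "a = c"
      then have "(b,a) \<in> r" using bc by simp
      then have "a = b" using an ab(1) by (meson antisymD)
      then show False using ab by simp
    qed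
    ultimately show "lt a c" by (simp add: lt_def)
  qed
  have 2: "\<forall>a. \<not> lt a a" by (simp add: lt_def)
  have 3: "\<forall>a\<in>A. \<forall>b\<in>A. a \<noteq> b \<longrightarrow> lt a b \<or> lt b a"
    using to by (auto simp: total_on_def lt_def)
  have 4: "\<forall>S. S \<subseteq> A \<longrightarrow> S \<noteq> {} \<longrightarrow> (\<exists>m\<in>S. \<forall>b\<in>S. b \<noteq> m \<longrightarrow> lt m b)"
  proof (intro allI impI)
    fix S assume S: "S \<subseteq> A" "S \<noteq> {}"
    obtain m where m: "m \<in> S" "\<And>y. (y, m) \<in> r - Id \<Longrightarrow> y \<notin> S"
      using wfE_min'[OF wf S(2)] by blast
    have "\<forall>b\<in>S. b \<noteq> m \<longrightarrow> lt m b"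
    proof (intro ballI impI)
      fix b assume b: "b \<in> S" "b \<noteq> m"
      have "(m, b) \<in> r \<or> (b, m) \<in> r" using to S b m(1) by (auto simp: total_on_def)
      moreover have "(b, m) \<notin> r" using m(2)[of b] b by auto
      ultimately show "lt m b" using b by (auto simp: lt_def)
    qed
    then show "\<exists>m\<in>S. \<forall>b\<in>S. b \<noteq> m \<longrightarrow> lt m b" using m(1) by blast
  qed
  show ?thesis using 1 2 3 4 by blast
qed

context Metric_space
begin

lemma lip_cont:
  assumes "\<And>y z. y \<in> M \<Longrightarrow> z \<in> M \<Longrightarrow> \<bar>f y - f z\<bar> \<le> d y z"
  shows "continuous_map mtopology euclideanreal f"
proof -
  have "continuous_map mtopology Met_TC.mtopology f"
    unfolding metric_continuous_map[OF Met_TC.Metric_space_axioms]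
  proof (intro conjI ballI allI impI)
    show "f ` M \<subseteq> UNIV" by simp
    fix a and e :: real assume a: "a \<in> M" and e: "e > 0"
    show "\<exists>\<delta>>0. \<forall>x. x \<in> M \<and> d a x < \<delta> \<longrightarrow> dist (f a) (f x) < e"
    proof (intro exI conjI allI impI)
      show "e > 0" by fact
      fix x assume "x \<in> M \<and> d a x < e"
      then show "dist (f a) (f x) < e" using assms[of a x] a by (simp add: dist_real_def)
    qed
  qed
  then show ?thesis by simp
qed

lemma bump:
  assumes C: "C \<subseteq> M" and r: "r > 0"
  defines "f \<equiv> \<lambda>y. if C = {} then 0 else (SUP c\<in>C. max 0 (r - d y c))"
  shows "continuous_map mtopology euclideanreal f"
    and "\<And>y. 0 \<le> f y"
    and "\<And>y. 0 < f y \<longleftrightarrow> (\<exists>c\<in>C. d y c < r)"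
proof -
  have bdd: "bdd_above ((\<lambda>c. max 0 (r - d y c)) ` C)" for y
    by (rule bdd_aboveI[of _ r]) (use r in \<open>auto simp: nonneg\<close>)
  show nn: "0 \<le> f y" for y
  proof (cases "C = {}")
    case False
    then obtain c where "c \<in> C" by blast
    then have "0 \<le> (SUP c\<in>C. max 0 (r - d y c))"
      by (rule cSUP_upper2[OF bdd]) simp
    then show ?thesis using False by (simp add: f_def)
  qed (simp add: f_def)
  show "0 < f y \<longleftrightarrow> (\<exists>c\<in>C. d y c < r)" for y
  proof (cases "C = {}")
    case False
    have "0 < f y \<longleftrightarrow> (\<exists>c\<in>C. 0 < max 0 (r - d y c))"
      using False by (simp add: f_def less_cSUP_iff[OF False bdd])
    also have "\<dots> \<longleftrightarrow> (\<exists>c\<in>C. d y c < r)" by (simp add: less_max_iff_disj)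
    finally show ?thesis .
  qed (simp add: f_def)
  have half: "f y \<le> f z + d y z" if y: "y \<in> M" and z: "z \<in> M" for y z
  proof (cases "C = {}")
    case False
    have "(SUP c\<in>C. max 0 (r - d y c)) \<le> f z + d y z"
    proof (rule cSUP_least[OF False])
      fix c assume c: "c \<in> C"
      then have cM: "c \<in> M" using C by blast
      have "d z c \<le> d z y + d y c" using triangle[OF z y cM] .
      then have "max 0 (r - d y c) \<le> max 0 (r - d z c) + d y z" using nonneg[of y z] commute[of y z] by auto
      moreover have "max 0 (r - d z c) \<le> f z"
      proof -
        have "max 0 (r - d z c) \<le> (SUP c\<in>C. max 0 (r - d z c))" by (rule cSUP_upper[OF c bdd])
        then show ?thesis using False by (simp only: f_def if_False)
      qed
      ultimately show "max 0 (r - d y c) \<le> f z + d y z" by linarith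
    qed
    then show ?thesis using False by (simp add: f_def)
  qed (simp add: f_def nonneg)
  show "continuous_map mtopology euclideanreal f"
  proof (rule lip_cont)
    fix y z assume "y \<in> M" "z \<in> M"
    then show "\<bar>f y - f z\<bar> \<le> d y z" using half[of y z] half[of z y] commute[of y z] by linarith
  qed
qed

end

lemma subsingleton_finite: "(\<And>a b. a \<in> S \<Longrightarrow> b \<in> S \<Longrightarrow> a = b) \<Longrightarrow> finite S"
proof (cases "S = {}")
  case False
  assume h: "\<And>a b. a \<in> S \<Longrightarrow> b \<in> S \<Longrightarrow> a = b"
  then obtain a where "a \<in> S" using False by blast
  then have "S \<subseteq> {a}" using h by blast
  then show ?thesis using finite_subset by blast
qed simp

definition rad :: "nat \<Rightarrow> real" where "rad n = (1/2)^n"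

lemma rad_pos: "0 < rad n" by (simp add: rad_def)

lemma rad_mono: "m \<le> n \<Longrightarrow> rad n \<le> rad m"
  unfolding rad_def by (rule power_decreasing) auto

lemma rad_Suc: "rad (Suc n) = rad n / 2" by (simp add: rad_def)

lemma rad_small: "e > 0 \<Longrightarrow> \<exists>n. rad n < e"
  unfolding rad_def using real_arch_pow_inv[of e "1/2"] by simp

locale rudin = Metric_space M d for M :: "'a set" and d +
  fixes \<U> :: "'a set set" and ltU :: "'a set \<Rightarrow> 'a set \<Rightarrow> bool"
  assumes opens: "\<And>U. U \<in> \<U> \<Longrightarrow> openin mtopology U"
    and cover: "\<Union>\<U> = M"
    and ltU_trans: "\<And>a b c. a\<in>\<U> \<Longrightarrow> b\<in>\<U> \<Longrightarrow> c\<in>\<U> \<Longrightarrow> ltU a b \<Longrightarrow> ltU b c \<Longrightarrow> ltU a c"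
    and ltU_irrefl: "\<And>a. \<not> ltU a a"
    and ltU_total: "\<And>a b. a\<in>\<U> \<Longrightarrow> b\<in>\<U> \<Longrightarrow> a \<noteq> b \<Longrightarrow> ltU a b \<or> ltU b a"
    and ltU_least: "\<And>S. S \<subseteq> \<U> \<Longrightarrow> S \<noteq> {} \<Longrightarrow> \<exists>m\<in>S. \<forall>b\<in>S. b \<noteq> m \<longrightarrow> ltU m b"
begin

definition leastU where "leastU V c \<longleftrightarrow> V \<in> \<U> \<and> c \<in> V \<and> (\<forall>W\<in>\<U>. c \<in> W \<longrightarrow> W = V \<or> ltU V W)"
definition Cen where "Cen n V K = {c\<in>M. leastU V c \<and> c \<notin> K \<and> mball c (3 * rad n) \<subseteq> V}"
definition Cov where "Cov = rec_nat {} (\<lambda>n K. K \<union> (\<Union>V\<in>\<U>. \<Union>c\<in>Cen n V K. mball c (rad n)))"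
definition Ce where "Ce n V = Cen n V (Cov n)"
definition D where "D n V = (\<Union>c\<in>Ce n V. mball c (rad n))"

lemma Cov_0: "Cov 0 = {}" by (simp add: Cov_def)
lemma Cov_Suc: "Cov (Suc n) = Cov n \<union> (\<Union>V\<in>\<U>. D n V)"
  by (simp add: Cov_def D_def Ce_def)

lemma Cov_iff: "x \<in> Cov n \<longleftrightarrow> (\<exists>j<n. \<exists>V\<in>\<U>. x \<in> D j V)"
proof (induction n)
  case 0 then show ?case by (simp add: Cov_0)
next
  case (Suc n)
  have "x \<in> Cov (Suc n) \<longleftrightarrow> (\<exists>j<n. \<exists>V\<in>\<U>. x \<in> D j V) \<or> (\<exists>V\<in>\<U>. x \<in> D n V)"
    by (simp add: Cov_Suc Suc.IH)
  also have "\<dots> \<longleftrightarrow> (\<exists>j<Suc n. \<exists>V\<in>\<U>. x \<in> D j V)" by (auto simp: less_Suc_eq)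
  finally show ?case .
qed

lemma leastU_ex: "x \<in> M \<Longrightarrow> \<exists>V. leastU V x"
proof -
  assume "x \<in> M"
  then have ne: "{V\<in>\<U>. x \<in> V} \<noteq> {}" using cover by blast
  obtain m where m: "m \<in> {V\<in>\<U>. x \<in> V}" "\<forall>b\<in>{V\<in>\<U>. x \<in> V}. b \<noteq> m \<longrightarrow> ltU m b"
    using ltU_least[OF _ ne] by blast
  then have "leastU m x" unfolding leastU_def by blast
  then show ?thesis by blast
qed

lemma leastU_notin: "leastU V' q \<Longrightarrow> V \<in> \<U> \<Longrightarrow> ltU V V' \<Longrightarrow> q \<notin> V"
proof
  assume l: "leastU V' q" and V: "V \<in> \<U>" and lt: "ltU V V'" and q: "q \<in> V"
  then have "V = V' \<or> ltU V' V" unfolding leastU_def by blast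
  moreover have "V' \<in> \<U>" using l by (simp add: leastU_def)
  ultimately show False using lt ltU_irrefl ltU_trans[of V V' V] V by blast
qed

lemma Ce_M: "Ce n V \<subseteq> M" by (auto simp: Ce_def Cen_def)

lemma D_sub: "D n V \<subseteq> V"
proof
  fix y assume "y \<in> D n V"
  then obtain c where c: "c \<in> Ce n V" "y \<in> mball c (rad n)" by (auto simp: D_def)
  have "mball c (rad n) \<subseteq> mball c (3 * rad n)" by (rule mball_subset_concentric) (use rad_pos[of n] in simp)
  also have "\<dots> \<subseteq> V" using c(1) by (simp add: Ce_def Cen_def)
  finally show "y \<in> V" using c(2) by blast
qed

lemma D_open: "openin mtopology (D n V)"
  unfolding D_def by (rule openin_Union) auto

lemma D_cover: "x \<in> M \<Longrightarrow> \<exists>n V. V \<in> \<U> \<and> x \<in> D n V"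
proof -
  assume x: "x \<in> M"
  obtain V where V: "leastU V x" using leastU_ex[OF x] by blast
  then have VU: "V \<in> \<U>" "x \<in> V" by (auto simp: leastU_def)
  then obtain e where e: "e > 0" "mball x e \<subseteq> V" using opens[of V] openin_mtopology by blast
  obtain n where n: "rad n < e / 3" using rad_small[of "e/3"] e by auto
  show ?thesis
  proof (cases "x \<in> Cov n")
    case True then show ?thesis using Cov_iff by blast
  next
    case False
    have "mball x (3 * rad n) \<subseteq> mball x e" by (rule mball_subset_concentric) (use n in simp)
    then have "x \<in> Ce n V" using False x V e(2) by (auto simp: Ce_def Cen_def)
    then have "x \<in> D n V" using x rad_pos[of n] by (auto simp: D_def)
    then show ?thesis using VU by blast
  qed
qed

lemma D_lf: "x \<in> M \<Longrightarrow> \<exists>r>0. finite {(i, V). V \<in> \<U> \<and> D i V \<inter> mball x r \<noteq> {}}"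
proof -
  assume x: "x \<in> M"
  obtain n U where U: "U \<in> \<U>" "x \<in> D n U" using D_cover[OF x] by blast
  obtain e where e: "e > 0" "mball x e \<subseteq> D n U" using D_open[of n U] U(2) openin_mtopology by blast
  obtain j where j: "rad j < e" using rad_small e by blast
  have xj: "mball x (rad j) \<subseteq> D n U"
    using e(2) mball_subset_concentric[of "rad j" e x] j by simp
  define k where "k = n + j + 1"
  define r where "r = rad k"
  have r2: "2 * r = rad (n + j)" by (simp add: r_def k_def rad_Suc)
  have a: "D i V \<inter> mball x r = {}" if i: "k \<le> i" and V: "V \<in> \<U>" for i V
  proof (rule ccontr)
    assume "D i V \<inter> mball x r \<noteq> {}"
    then obtain y where y: "y \<in> D i V" "y \<in> mball x r" by blast
    then obtain c where c: "c \<in> Ce i V" "y \<in> mball c (rad i)" by (auto simp: D_def)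
    have cM: "c \<in> M" and cnot: "c \<notin> Cov i" using c(1) by (auto simp: Ce_def Cen_def)
    have "n < i" using i by (simp add: k_def)
    then have "D n U \<subseteq> Cov i" using Cov_iff U(1) by blast
    then have "c \<notin> mball x (rad j)" using xj cnot by blast
    then have ge: "rad j \<le> d x c" using cM x by auto
    have "d x c \<le> d x y + d y c" using triangle x cM y(2) by auto
    moreover have "d x y < r" "d y c < rad i" using y c commute by auto
    moreover have "rad i \<le> r" using rad_mono[OF i] by (simp add: r_def)
    moreover have "rad (n + j) \<le> rad j" by (rule rad_mono) simp
    ultimately show False using ge r2 by linarith
  qed
  have b: "V = V'" if i: "i < k" and V: "V \<in> \<U>" "V' \<in> \<U>"
      and y: "y \<in> D i V" "y \<in> mball x r" and y': "y' \<in> D i V'" "y' \<in> mball x r" for i V V' y y'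
  proof -
    have key: False if lt: "ltU V V'" and V: "V \<in> \<U>" "V' \<in> \<U>"
      and y: "y \<in> D i V" "y \<in> mball x r" and y': "y' \<in> D i V'" "y' \<in> mball x r" for V V' y y'
    proof -
      obtain p where p: "p \<in> Ce i V" "y \<in> mball p (rad i)" using y(1) by (auto simp: D_def)
      obtain q where q: "q \<in> Ce i V'" "y' \<in> mball q (rad i)" using y'(1) by (auto simp: D_def)
      have pM: "p \<in> M" and qM: "q \<in> M" using p q Ce_M by blast+
      have "leastU V' q" using q(1) by (simp add: Ce_def Cen_def)
      then have "q \<notin> V" using leastU_notin V lt by blast
      moreover have "mball p (3 * rad i) \<subseteq> V" using p(1) by (simp add: Ce_def Cen_def)
      ultimately have "q \<notin> mball p (3 * rad i)" by blast
      then have ge: "3 * rad i \<le> d p q" using pM qM by auto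
      have yM: "y \<in> M" and y'M: "y' \<in> M" using y y' by auto
      have "d p q \<le> d p y + d y q" using triangle pM yM qM by auto
      moreover have "d y q \<le> d y x + d x q" using triangle yM x qM by auto
      moreover have "d x q \<le> d x y' + d y' q" using triangle x y'M qM by auto
      moreover have "d p y < rad i" "d y' q < rad i" using p q commute by auto
      moreover have "d y x < r" "d x y' < r" using y y' commute by auto
      moreover have "rad (n + j) \<le> rad i" by (rule rad_mono) (use i in \<open>simp add: k_def\<close>)
      ultimately show False using ge r2 by linarith
    qed
    show "V = V'"
    proof (rule ccontr)
      assume "V \<noteq> V'"
      then consider "ltU V V'" | "ltU V' V" using ltU_total V by blast
      then show False
      proof cases
        case 1 then show False using key[of V V' y y'] V y y' by blast
      next
        case 2 then show False using key[of V' V y' y] V y y' by blast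
      qed
    qed
  qed
  have "{(i, V). V \<in> \<U> \<and> D i V \<inter> mball x r \<noteq> {}} \<subseteq> Sigma {..<k} (\<lambda>i. {V\<in>\<U>. D i V \<inter> mball x r \<noteq> {}})"
  proof
    fix p assume "p \<in> {(i, V). V \<in> \<U> \<and> D i V \<inter> mball x r \<noteq> {}}"
    then obtain i V where p: "p = (i, V)" "V \<in> \<U>" "D i V \<inter> mball x r \<noteq> {}" by blast
    then have "\<not> k \<le> i" using a by blast
    then show "p \<in> Sigma {..<k} (\<lambda>i. {V\<in>\<U>. D i V \<inter> mball x r \<noteq> {}})" using p by simp
  qed
  moreover have "finite (Sigma {..<k} (\<lambda>i. {V\<in>\<U>. D i V \<inter> mball x r \<noteq> {}}))"
  proof (rule finite_SigmaI)
    show "finite {..<k}" by simp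
    fix i assume "i \<in> {..<k}"
    then show "finite {V\<in>\<U>. D i V \<inter> mball x r \<noteq> {}}"
      using b by (intro subsingleton_finite) blast
  qed
  ultimately have "finite {(i, V). V \<in> \<U> \<and> D i V \<inter> mball x r \<noteq> {}}" by (rule finite_subset)
  then show ?thesis using rad_pos[of k] by (auto simp: r_def)
qed

end

context rudin
begin

definition II :: "(nat \<times> 'a set) set" where "II = UNIV \<times> \<U>"
definition psi :: "nat \<times> 'a set \<Rightarrow> 'a \<Rightarrow> real" where
  "psi i = (\<lambda>y. if Ce (fst i) (snd i) = {} then 0 else (SUP c\<in>Ce (fst i) (snd i). max 0 (rad (fst i) - d y c)))"
definition Psi where "Psi y = (\<Sum>i\<in>II \<inter> {i\<in>II. psi i y \<noteq> 0}. psi i y)"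
definition ltI :: "nat \<times> 'a set \<Rightarrow> nat \<times> 'a set \<Rightarrow> bool" where
  "ltI i j \<longleftrightarrow> fst i < fst j \<or> (fst i = fst j \<and> ltU (snd i) (snd j))"

lemma psi_cont: "continuous_map mtopology euclideanreal (psi i)"
  unfolding psi_def using bump(1)[OF Ce_M rad_pos] by simp

lemma psi_nonneg: "0 \<le> psi i y"
  unfolding psi_def using bump(2)[OF Ce_M rad_pos] by simp

lemma psi_pos: "y \<in> M \<Longrightarrow> 0 < psi i y \<longleftrightarrow> y \<in> D (fst i) (snd i)"
proof -
  assume y: "y \<in> M"
  have "0 < psi i y \<longleftrightarrow> (\<exists>c\<in>Ce (fst i) (snd i). d y c < rad (fst i))"
    unfolding psi_def using bump(3)[OF Ce_M rad_pos] by simp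
  also have "\<dots> \<longleftrightarrow> y \<in> D (fst i) (snd i)"
    using y Ce_M commute by (auto simp: D_def)
  finally show ?thesis .
qed

lemma psi_ne: "y \<in> M \<Longrightarrow> psi i y \<noteq> 0 \<longleftrightarrow> y \<in> D (fst i) (snd i)"
  using psi_pos[of y i] psi_nonneg[of i y] by linarith

lemma psi_lf: "x \<in> M \<Longrightarrow> \<exists>N. openin mtopology N \<and> x \<in> N \<and> finite {i\<in>II. \<exists>y\<in>N. psi i y \<noteq> 0}"
proof -
  assume x: "x \<in> M"
  obtain r where r: "r > 0" "finite {(i, V). V \<in> \<U> \<and> D i V \<inter> mball x r \<noteq> {}}"
    using D_lf[OF x] by blast
  have "{i\<in>II. \<exists>y\<in>mball x r. psi i y \<noteq> 0} \<subseteq> {(i, V). V \<in> \<U> \<and> D i V \<inter> mball x r \<noteq> {}}"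
  proof
    fix p assume "p \<in> {i\<in>II. \<exists>y\<in>mball x r. psi i y \<noteq> 0}"
    then obtain y where p: "p \<in> II" "y \<in> mball x r" "psi p y \<noteq> 0" by blast
    then have "y \<in> M" by auto
    then have "y \<in> D (fst p) (snd p)" using psi_ne p(3) by blast
    then show "p \<in> {(i, V). V \<in> \<U> \<and> D i V \<inter> mball x r \<noteq> {}}" using p(1,2)
      by (cases p) (auto simp: II_def)
  qed
  then have "finite {i\<in>II. \<exists>y\<in>mball x r. psi i y \<noteq> 0}" using r(2) finite_subset by blast
  then show ?thesis using x r(1) by (intro exI[of _ "mball x r"]) auto
qed

lemma Psi_cont: "continuous_map mtopology euclideanreal Psi"
proof -
  have "continuous_map mtopology euclideanreal (\<lambda>x. \<Sum>i\<in>II \<inter> {i\<in>II. psi i x \<noteq> 0}. psi i x)"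
    by (rule continuous_map_lf_sum) (use psi_cont psi_lf in auto)
  then show ?thesis by (simp add: Psi_def[abs_def])
qed

lemma fin_psi: "y \<in> M \<Longrightarrow> finite {i\<in>II. psi i y \<noteq> 0}"
proof -
  assume "y \<in> M"
  then obtain N where N: "y \<in> N" "finite {i\<in>II. \<exists>z\<in>N. psi i z \<noteq> 0}" using psi_lf by blast
  have "{i\<in>II. psi i y \<noteq> 0} \<subseteq> {i\<in>II. \<exists>z\<in>N. psi i z \<noteq> 0}" using N(1) by blast
  then show ?thesis using N(2) finite_subset by blast
qed

lemma Psi_pos: "y \<in> M \<Longrightarrow> 0 < Psi y"
proof -
  assume y: "y \<in> M"
  obtain n V where nV: "V \<in> \<U>" "y \<in> D n V" using D_cover[OF y] by blast
  have "(n, V) \<in> II \<inter> {i\<in>II. psi i y \<noteq> 0}" using nV psi_ne[OF y, of "(n,V)"] by (simp add: II_def)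
  moreover have "0 < psi (n, V) y" using psi_pos[OF y, of "(n,V)"] nV by simp
  moreover have "finite (II \<inter> {i\<in>II. psi i y \<noteq> 0})" using fin_psi[OF y] by simp
  ultimately show ?thesis unfolding Psi_def
    using sum_pos2[of "II \<inter> {i\<in>II. psi i y \<noteq> 0}" "(n,V)" "\<lambda>i. psi i y"] psi_nonneg by blast
qed

end

context rudin
begin

lemma rudin_main:
  assumes V0: "V0 \<in> \<U>"
  shows "\<exists>F. continuous_dissection mtopology F \<and> l_complete mtopology F \<and>
           (\<forall>W. minimal_wedge mtopology F W \<longrightarrow> (\<exists>U\<in>\<U>. W \<subseteq> U \<times> {0<..1}))"
proof -
  define i0 where "i0 = (0::nat, V0)"
  have i0: "i0 \<in> II" using V0 by (simp add: i0_def II_def)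
  define phi where "phi i y = (if y \<in> M then psi i y / Psi y else (if i = i0 then 1 else 0))" for i y
  have phi_ne: "y \<in> M \<Longrightarrow> phi i y \<noteq> 0 \<longleftrightarrow> psi i y \<noteq> 0" for i y
    using Psi_pos[of y] by (simp add: phi_def)
  have Zout: "y \<notin> M \<Longrightarrow> {i\<in>II. phi i y \<noteq> 0} = {i0}" for y
    using i0 by (auto simp: phi_def)
  have "pdiss mtopology II ltI phi \<U>"
  proof
    fix i j k assume h: "i \<in> II" "j \<in> II" "k \<in> II" "ltI i j" "ltI j k"
    have mem: "snd i \<in> \<U>" "snd j \<in> \<U>" "snd k \<in> \<U>" using h(1-3) by (auto simp: II_def)
    have h4: "fst i < fst j \<or> (fst i = fst j \<and> ltU (snd i) (snd j))" using h(4) by (simp add: ltI_def)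
    have h5: "fst j < fst k \<or> (fst j = fst k \<and> ltU (snd j) (snd k))" using h(5) by (simp add: ltI_def)
    have t: "ltU (snd i) (snd j) \<Longrightarrow> ltU (snd j) (snd k) \<Longrightarrow> ltU (snd i) (snd k)"
      by (rule ltU_trans[OF mem])
    have "fst i < fst k \<or> (fst i = fst k \<and> ltU (snd i) (snd k))"
    proof (cases "fst i < fst j")
      case True
      then show ?thesis using h5 by (metis less_trans)
    next
      case False
      then have "fst i = fst j" "ltU (snd i) (snd j)" using h4 by auto
      then show ?thesis using h5 t by auto
    qed
    then show "ltI i k" by (simp add: ltI_def)
  next
    fix i show "\<not> ltI i i" by (simp add: ltI_def ltU_irrefl)
  next
    fix i j assume h: "i \<in> II" "j \<in> II" "i \<noteq> j"
    have mem: "snd i \<in> \<U>" "snd j \<in> \<U>" using h(1-2) by (auto simp: II_def)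
    show "ltI i j \<or> ltI j i"
    proof (cases "fst i = fst j")
      case True
      then have "snd i \<noteq> snd j" using h(3) by (metis prod_eqI)
      then have "ltU (snd i) (snd j) \<or> ltU (snd j) (snd i)" by (rule ltU_total[OF mem])
      then show ?thesis using True by (auto simp: ltI_def)
    next
      case False
      then have "fst i < fst j \<or> fst j < fst i" by linarith
      then show ?thesis by (auto simp: ltI_def)
    qed
  next
    fix i
    have "continuous_map mtopology euclideanreal (\<lambda>y. psi i y / Psi y)"
      by (rule continuous_map_real_divide[OF psi_cont Psi_cont]) (use Psi_pos in force)
    then show "continuous_map mtopology euclideanreal (phi i)"
      by (rule continuous_map_eq) (simp add: phi_def)
  next
    fix i y show "0 \<le> phi i y"
    proof (cases "y \<in> M")
      case True
      then show ?thesis using psi_nonneg[of i y] Psi_pos[OF True] by (simp add: phi_def divide_nonneg_pos)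
    qed (simp add: phi_def)
  next
    fix x assume "x \<in> topspace mtopology"
    then have x: "x \<in> M" by simp
    obtain N where N: "openin mtopology N" "x \<in> N" "finite {i\<in>II. \<exists>y\<in>N. psi i y \<noteq> 0}"
      using psi_lf[OF x] by blast
    have "N \<subseteq> M" using N(1) openin_subset by fastforce
    then have "{i\<in>II. \<exists>y\<in>N. phi i y \<noteq> 0} \<subseteq> {i\<in>II. \<exists>y\<in>N. psi i y \<noteq> 0}"
      using phi_ne by blast
    then have "finite {i\<in>II. \<exists>y\<in>N. phi i y \<noteq> 0}" using N(3) finite_subset by blast
    then show "\<exists>N. openin mtopology N \<and> x \<in> N \<and> finite {i\<in>II. \<exists>y\<in>N. phi i y \<noteq> 0}"
      using N by blast
  next
    fix y show "finite {i\<in>II. phi i y \<noteq> 0}"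
    proof (cases "y \<in> M")
      case True
      then have "{i\<in>II. phi i y \<noteq> 0} = {i\<in>II. psi i y \<noteq> 0}" using phi_ne[OF True] by blast
      then show ?thesis using fin_psi[OF True] by simp
    next
      case False then show ?thesis using Zout by simp
    qed
  next
    fix y show "(\<Sum>i\<in>{i\<in>II. phi i y \<noteq> 0}. phi i y) = 1"
    proof (cases "y \<in> M")
      case True
      then have eq: "{i\<in>II. phi i y \<noteq> 0} = {i\<in>II. psi i y \<noteq> 0}" using phi_ne[OF True] by blast
      have "(\<Sum>i\<in>{i\<in>II. phi i y \<noteq> 0}. phi i y) = (\<Sum>i\<in>{i\<in>II. psi i y \<noteq> 0}. psi i y / Psi y)"
        unfolding eq using True by (simp add: phi_def)
      also have "\<dots> = (\<Sum>i\<in>{i\<in>II. psi i y \<noteq> 0}. psi i y) / Psi y"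
        by (simp add: sum_divide_distrib)
      also have "(\<Sum>i\<in>{i\<in>II. psi i y \<noteq> 0}. psi i y) = Psi y"
        unfolding Psi_def by (rule sum.cong) auto
      finally show ?thesis using Psi_pos[OF True] by simp
    next
      case False then show ?thesis using Zout i0 by (simp add: phi_def)
    qed
  next
    fix i assume i: "i \<in> II"
    have "{x\<in>topspace mtopology. phi i x \<noteq> 0} \<subseteq> D (fst i) (snd i)"
    proof
      fix x assume "x \<in> {x\<in>topspace mtopology. phi i x \<noteq> 0}"
      then have x: "x \<in> M" "phi i x \<noteq> 0" by auto
      then have "psi i x \<noteq> 0" using phi_ne[OF x(1)] by blast
      then show "x \<in> D (fst i) (snd i)" using psi_ne[OF x(1)] by blast
    qed
    also have "\<dots> \<subseteq> snd i" by (rule D_sub)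
    finally show "\<exists>U\<in>\<U>. {x\<in>topspace mtopology. phi i x \<noteq> 0} \<subseteq> U"
      using i by (auto simp: II_def)
  qed
  then show ?thesis by (rule pdiss.main)
qed

end

theorem lemma4p5:
  fixes X :: "'a topology" and \<U> :: "'a set set"
  assumes "metrizable_space X"
    and "\<forall>U\<in>\<U>. openin X U"
    and "\<Union>\<U> = topspace X"
  shows "\<exists>F. continuous_dissection X F \<and> l_complete X F \<and>
           (\<forall>W. minimal_wedge X F W \<longrightarrow> (\<exists>U\<in>\<U>. W \<subseteq> U \<times> {0<..1}))"
proof (cases "topspace X = {}")
  case True
  define F :: "('a \<Rightarrow> real) set" where "F = {\<lambda>x. 0, \<lambda>x. 1}"
  have eq: "\<And>f g. eq_on X f g" using True by (simp add: eq_on_def)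
  have "continuous_dissection X F"
    unfolding continuous_dissection_def F_def using True by (simp add: continuous_map_const)
  moreover have "l_complete X F"
  proof -
    have e: "\<And>g. \<exists>\<eta>\<in>F. eq_on X \<eta> g" using eq unfolding F_def by blast
    show ?thesis unfolding l_complete_def by (simp add: e)
  qed
  moreover have "\<forall>W. minimal_wedge X F W \<longrightarrow> (\<exists>U\<in>\<U>. W \<subseteq> U \<times> {0<..1})"
  proof (intro allI impI)
    fix W assume "minimal_wedge X F W"
    then have "is_wedge X F W" "W \<noteq> {}" unfolding minimal_wedge_def by simp_all
    then obtain a b where "W = wedge X a b" "W \<noteq> {}"
      unfolding is_wedge_def by blast
    then show "\<exists>U\<in>\<U>. W \<subseteq> U \<times> {0<..1}" using True by (simp add: wedge_def)
  qed
  ultimately show ?thesis by blast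
next
  case False
  obtain M d where Md: "Metric_space M d" "X = Metric_space.mtopology M d"
    using assms(1) unfolding metrizable_space_def by blast
  interpret Metric_space M d by (rule Md(1))
  have top: "topspace X = M" using Md(2) by simp
  from exists_wo[of \<U>] obtain lt :: "'a set \<Rightarrow> 'a set \<Rightarrow> bool" where lt0:
    "(\<forall>a b c. a\<in>\<U> \<longrightarrow> b\<in>\<U> \<longrightarrow> c\<in>\<U> \<longrightarrow> lt a b \<longrightarrow> lt b c \<longrightarrow> lt a c)
    \<and> (\<forall>a. \<not> lt a a) \<and> (\<forall>a\<in>\<U>. \<forall>b\<in>\<U>. a \<noteq> b \<longrightarrow> lt a b \<or> lt b a)
    \<and> (\<forall>S. S \<subseteq> \<U> \<longrightarrow> S \<noteq> {} \<longrightarrow> (\<exists>m\<in>S. \<forall>b\<in>S. b \<noteq> m \<longrightarrow> lt m b))" ..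
  note lt = lt0[THEN conjunct1] lt0[THEN conjunct2, THEN conjunct1]
    lt0[THEN conjunct2, THEN conjunct2, THEN conjunct1] lt0[THEN conjunct2, THEN conjunct2, THEN conjunct2]
  interpret R: rudin M d \<U> lt
  proof
    show "\<And>U. U \<in> \<U> \<Longrightarrow> openin mtopology U" using assms(2) Md(2) by blast
    show "\<Union>\<U> = M" using assms(3) top by simp
  next
    fix a b c assume "a\<in>\<U>" "b\<in>\<U>" "c\<in>\<U>" "lt a b" "lt b c"
    then show "lt a c" using lt(1) by blast
  next
    fix a show "\<not> lt a a" using lt(2) by blast
  next
    fix a b assume "a\<in>\<U>" "b\<in>\<U>" "a \<noteq> b"
    then show "lt a b \<or> lt b a" using lt(3) by blast
  next
    fix S assume "S \<subseteq> \<U>" "S \<noteq> {}"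
    then show "\<exists>m\<in>S. \<forall>b\<in>S. b \<noteq> m \<longrightarrow> lt m b" using lt(4) by blast
  qed
  obtain V0 where V0: "V0 \<in> \<U>" using False assms(3) by blast
  have "\<exists>F. continuous_dissection mtopology F \<and> l_complete mtopology F \<and>
           (\<forall>W. minimal_wedge mtopology F W \<longrightarrow> (\<exists>U\<in>\<U>. W \<subseteq> U \<times> {0<..1}))"
    by (rule R.rudin_main[OF V0])
  then show ?thesis using Md(2) by simp
qed

end
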